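(* Let $\mathbb{K}$ be a field of characteristic $0$ and let $G$ be a subgroup of the symmetric group $\Sigma_3$. Let $(A,\mu)$ be a $G$-associative algebra over $\mathbb{K}$ and let $\alpha \colon A \to A$ be a linear map such that $\alpha \circ \mu = \mu \circ \alpha^{\otimes 2}$. Then $(A,\mu_\alpha = \alpha \circ \mu,\alpha)$ is a $G$-Hom-associative algebra. Moreover, $\alpha$ is multiplicative with respect to $\mu_\alpha$, i.e., $\alpha \circ \mu_\alpha = \mu_\alpha \circ \alpha^{\otimes 2}$. Suppose further that $(B,\mu')$ is another $G$-associative algebra and that $\alpha' \colon B \to B$ is a linear map such that $\alpha' \circ \mu' = \mu' \circ \alpha'^{\otimes 2}$. If $f \colon A \to B$ is a linear map with $f \circ \mu = \mu' \circ f^{\otimes 2}$ and $f \circ \alpha = \alpha' \circ f$, then $f \colon (A,\mu_\alpha,\alpha) \to (B,\mu'_{\alpha'} = \alpha' \circ \mu',\alpha')$ is a morphism of $G$-Hom-associative algebras.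
   Context: All vector spaces and (multi)linear maps are over a fixed field $\mathbb{K}$ of characteristic $0$. For $G \subseteq \Sigma_3$ a subgroup, a $G$-Hom-associative algebra is a triple $(A,\mu,\alpha)$ with $A$ a vector space, $\mu \colon A \otimes A \to A$ bilinear (written $\mu(x,y) = xy$) and $\alpha \colon A \to A$ linear (not required to be multiplicative), such that for all $x_1,x_2,x_3 \in A$: $$\sum_{\sigma \in G} (-1)^{\varepsilon(\sigma)} \left\{(x_{\sigma(1)}x_{\sigma(2)})\alpha(x_{\sigma(3)}) - \alpha(x_{\sigma(1)})(x_{\sigma(2)}x_{\sigma(3)})\right\} = 0,$$ where $\varepsilon(\sigma)$ denotes the signature of $\sigma$. A $G$-associative algebra is a (not necessarily associative) algebra $(A,\mu)$ satisfying this identity with $\alpha = \mathrm{Id}_A$. A morphism $f \colon (A,\mu_A,\alpha_A) \to (B,\mu_B,\alpha_B)$ of $G$-Hom-associative algebras is a linear map $f \colon A \to B$ with $f \circ \alpha_A = \alpha_B \circ f$ and $f \circ \mu_A = \mu_B \circ f^{\otimes 2}$. *)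

theory Defs
  imports Complex_Main "HOL-Combinatorics.Permutations"
begin

definition subgroup_S3 :: "(nat \<Rightarrow> nat) set \<Rightarrow> bool" where
  "subgroup_S3 G \<longleftrightarrow> G \<subseteq> {\<sigma>. \<sigma> permutes {1,2,3}} \<and> id \<in> G \<and>
     (\<forall>\<sigma>\<in>G. \<forall>\<tau>\<in>G. \<sigma> \<circ> \<tau> \<in> G) \<and> (\<forall>\<sigma>\<in>G. inv \<sigma> \<in> G)"

definition bilinear_map ::
  "('k::field \<Rightarrow> 'v::ab_group_add \<Rightarrow> 'v) \<Rightarrow> ('v \<Rightarrow> 'v \<Rightarrow> 'v) \<Rightarrow> bool" where
  "bilinear_map scale mu \<longleftrightarrow>
     (\<forall>x. Vector_Spaces.linear scale scale (mu x)) \<and>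
     (\<forall>y. Vector_Spaces.linear scale scale (\<lambda>x. mu x y))"

definition G_hom_assoc_identity ::
  "('k::field \<Rightarrow> 'v::ab_group_add \<Rightarrow> 'v) \<Rightarrow> (nat \<Rightarrow> nat) set \<Rightarrow> ('v \<Rightarrow> 'v \<Rightarrow> 'v) \<Rightarrow> ('v \<Rightarrow> 'v) \<Rightarrow> bool" where
  "G_hom_assoc_identity scale G mu alpha \<longleftrightarrow>
     (\<forall>x1 x2 x3. let x = (\<lambda>i::nat. if i = 1 then x1 else if i = 2 then x2 else x3) in
        (\<Sum>\<sigma>\<in>G. scale (of_int (sign \<sigma>))
            (mu (mu (x (\<sigma> 1)) (x (\<sigma> 2))) (alpha (x (\<sigma> 3)))
             - mu (alpha (x (\<sigma> 1))) (mu (x (\<sigma> 2)) (x (\<sigma> 3))))) = 0)"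

definition G_hom_assoc_algebra ::
  "('k::field \<Rightarrow> 'v::ab_group_add \<Rightarrow> 'v) \<Rightarrow> (nat \<Rightarrow> nat) set \<Rightarrow> ('v \<Rightarrow> 'v \<Rightarrow> 'v) \<Rightarrow> ('v \<Rightarrow> 'v) \<Rightarrow> bool" where
  "G_hom_assoc_algebra scale G mu alpha \<longleftrightarrow>
     vector_space scale \<and> bilinear_map scale mu \<and> Vector_Spaces.linear scale scale alpha \<and>
     G_hom_assoc_identity scale G mu alpha"

definition G_assoc_algebra ::
  "('k::field \<Rightarrow> 'v::ab_group_add \<Rightarrow> 'v) \<Rightarrow> (nat \<Rightarrow> nat) set \<Rightarrow> ('v \<Rightarrow> 'v \<Rightarrow> 'v) \<Rightarrow> bool" where
  "G_assoc_algebra scale G mu \<longleftrightarrow>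
     vector_space scale \<and> bilinear_map scale mu \<and> G_hom_assoc_identity scale G mu id"

definition G_hom_assoc_morphism ::
  "('k::field \<Rightarrow> 'v::ab_group_add \<Rightarrow> 'v) \<Rightarrow> ('v \<Rightarrow> 'v \<Rightarrow> 'v) \<Rightarrow> ('v \<Rightarrow> 'v) \<Rightarrow>
   ('k \<Rightarrow> 'w::ab_group_add \<Rightarrow> 'w) \<Rightarrow> ('w \<Rightarrow> 'w \<Rightarrow> 'w) \<Rightarrow> ('w \<Rightarrow> 'w) \<Rightarrow> ('v \<Rightarrow> 'w) \<Rightarrow> bool" where
  "G_hom_assoc_morphism scaleA muA alphaA scaleB muB alphaB f \<longleftrightarrow>
     Vector_Spaces.linear scaleA scaleB f \<and> f \<circ> alphaA = alphaB \<circ> f \<and>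
     (\<forall>x y. f (muA x y) = muB (f x) (f y))"

end

theory Submission
  imports Defs
begin

theorem theorem2p1:
  fixes scaleA :: "'k::field_char_0 \<Rightarrow> 'a::ab_group_add \<Rightarrow> 'a"
    and scaleB :: "'k \<Rightarrow> 'b::ab_group_add \<Rightarrow> 'b"
    and G :: "(nat \<Rightarrow> nat) set"
    and mu :: "'a \<Rightarrow> 'a \<Rightarrow> 'a" and alpha :: "'a \<Rightarrow> 'a"
    and mu' :: "'b \<Rightarrow> 'b \<Rightarrow> 'b" and alpha' :: "'b \<Rightarrow> 'b"
    and f :: "'a \<Rightarrow> 'b"
  assumes G: "subgroup_S3 G"
    and A: "G_assoc_algebra scaleA G mu"
    and alpha_lin: "Vector_Spaces.linear scaleA scaleA alpha"
    and alpha_mult: "\<forall>x y. alpha (mu x y) = mu (alpha x) (alpha y)"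
  shows "G_hom_assoc_algebra scaleA G (\<lambda>x y. alpha (mu x y)) alpha
       \<and> (\<forall>x y. alpha (alpha (mu x y)) = alpha (mu (alpha x) (alpha y)))
       \<and> ((G_assoc_algebra scaleB G mu' \<and>
           Vector_Spaces.linear scaleB scaleB alpha' \<and>
           (\<forall>x y. alpha' (mu' x y) = mu' (alpha' x) (alpha' y)) \<and>
           Vector_Spaces.linear scaleA scaleB f \<and>
           (\<forall>x y. f (mu x y) = mu' (f x) (f y)) \<and>
           f \<circ> alpha = alpha' \<circ> f)
         \<longrightarrow> G_hom_assoc_morphism scaleA (\<lambda>x y. alpha (mu x y)) alpha
               scaleB (\<lambda>x y. alpha' (mu' x y)) alpha' f)"
proof -
  have vs: "vector_space scaleA" and bil: "bilinear_map scaleA mu"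
    and idt: "G_hom_assoc_identity scaleA G mu id"
    using A unfolding G_assoc_algebra_def by auto
  have bil2: "bilinear_map scaleA (\<lambda>x y. alpha (mu x y))"
    using bil alpha_lin Vector_Spaces.linear_compose[of scaleA scaleA _ scaleA alpha]
    unfolding bilinear_map_def comp_def by blast
  define h where "h = alpha \<circ> alpha"
  have hlin: "Vector_Spaces.linear scaleA scaleA h"
    unfolding h_def using alpha_lin Vector_Spaces.linear_compose by blast
  have key: "\<And>a b c. alpha (mu (alpha (mu a b)) (alpha c)) = h (mu (mu a b) c)"
    "\<And>a b c. alpha (mu (alpha a) (alpha (mu b c))) = h (mu a (mu b c))"
    unfolding h_def using alpha_mult by auto
  have idn: "G_hom_assoc_identity scaleA G (\<lambda>x y. alpha (mu x y)) alpha"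
    unfolding G_hom_assoc_identity_def Let_def
  proof (intro allI)
    fix x1 x2 x3 :: 'a
    define x where "x = (\<lambda>i::nat. if i = 1 then x1 else if i = 2 then x2 else x3)"
    have z: "(\<Sum>\<sigma>\<in>G. scaleA (of_int (sign \<sigma>))
            (mu (mu (x (\<sigma> 1)) (x (\<sigma> 2))) (x (\<sigma> 3))
             - mu (x (\<sigma> 1)) (mu (x (\<sigma> 2)) (x (\<sigma> 3))))) = 0"
      using idt unfolding G_hom_assoc_identity_def Let_def x_def by simp
    have "h (\<Sum>\<sigma>\<in>G. scaleA (of_int (sign \<sigma>))
            (mu (mu (x (\<sigma> 1)) (x (\<sigma> 2))) (x (\<sigma> 3))
             - mu (x (\<sigma> 1)) (mu (x (\<sigma> 2)) (x (\<sigma> 3)))))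
      = (\<Sum>\<sigma>\<in>G. scaleA (of_int (sign \<sigma>))
            (h (mu (mu (x (\<sigma> 1)) (x (\<sigma> 2))) (x (\<sigma> 3)))
             - h (mu (x (\<sigma> 1)) (mu (x (\<sigma> 2)) (x (\<sigma> 3))))))"
      using hlin by (simp add: linear_iff_module_hom module_hom.sum module_hom.scale module_hom.diff)
    also have "\<dots> = (\<Sum>\<sigma>\<in>G. scaleA (of_int (sign \<sigma>))
            (alpha (mu (alpha (mu (x (\<sigma> 1)) (x (\<sigma> 2)))) (alpha (x (\<sigma> 3))))
             - alpha (mu (alpha (x (\<sigma> 1))) (alpha (mu (x (\<sigma> 2)) (x (\<sigma> 3)))))))"
      by (simp add: key)
    finally show "(\<Sum>\<sigma>\<in>G. scaleA (of_int (sign \<sigma>))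
            (alpha (mu (alpha (mu (x (\<sigma> 1)) (x (\<sigma> 2)))) (alpha (x (\<sigma> 3))))
             - alpha (mu (alpha (x (\<sigma> 1))) (alpha (mu (x (\<sigma> 2)) (x (\<sigma> 3))))))) = 0"
      using z hlin by (simp add: linear_iff_module_hom module_hom.zero)
  qed
  show ?thesis
    using vs bil2 alpha_lin idn alpha_mult
    unfolding G_hom_assoc_algebra_def G_hom_assoc_morphism_def
    by (auto simp: fun_eq_iff)
qed

end
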